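(* Let $k\ge2$ be an integer, $\lambda=e^{2\pi i/k}$, and $a,b,c,d\in\mathbb{C}$. Suppose that for every $j\in\mathbb{N}$, both pairs $(x,y)=(a+\lambda^j d,\ c+\lambda^j b)$ and $(x,y)=(a+\lambda^j c,\ d+\lambda^j b)$ satisfy $x^k=y^k$ (these are the unary functions obtained by attaching the unary function $(1,\lambda^j)$ to either variable of $Q=\begin{pmatrix}a&c\\d&b\end{pmatrix}$). Then: If $k\ge3$, one of the following holds: (1) $a=b=c=d=0$; (2) $a=b=0$ and $c^k=d^k$; (3) $c=d=0$ and $a^k=b^k$; (4) none of $a,b,c,d$ is zero, $ab=cd$, and the ratio of any two of $a,b,c,d$ is a $k$-th root of unity. If $k=2$, one of the following holds: (1) $a=b=c=d=0$; (2) $a=b=0$ and $c^2=d^2$; (3) $c=d=0$ and $a^2=b^2$; (4) none of $a,b,c,d$ is zero, $b=a$ and $d=c$; (5) none of $a,b,c,d$ is zero, $b=-a$ and $d=-c$. *)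

theory Defs
  imports Complex_Main
begin
end

theory Submission
  imports Defs "HOL-Computational_Algebra.Polynomial"
begin

lemma vanish:
  fixes f :: "nat \<Rightarrow> complex"
  assumes k: "k > 0" and h: "\<And>z. z ^ k = 1 \<Longrightarrow> (\<Sum>m<k. f m * z ^ m) = 0"
  shows "\<And>n. n < k \<Longrightarrow> f n = 0"
proof -
  define p where "p = (\<Sum>m<k. monom (f m) m)"
  have ev: "poly p z = (\<Sum>m<k. f m * z ^ m)" for z
    by (simp add: p_def poly_sum poly_monom)
  have co: "coeff p n = (if n < k then f n else 0)" for n
    by (simp add: p_def coeff_sum coeff_monom)
  have p0: "p = 0"
  proof (rule ccontr)
    assume np: "p \<noteq> 0"
    have "degree p < k"
    proof -
      have "degree p \<le> k - 1"
        by (rule degree_le) (use co k in auto)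
      thus ?thesis using k by linarith
    qed
    moreover have "k \<le> card {x. poly p x = 0}"
    proof -
      have "{z::complex. z ^ k = 1} \<subseteq> {x. poly p x = 0}" using h ev by auto
      hence "card {z::complex. z ^ k = 1} \<le> card {x. poly p x = 0}"
        by (intro card_mono poly_roots_finite np)
      thus ?thesis using card_roots_unity_eq[OF k] by simp
    qed
    moreover have "card {x. poly p x = 0} \<le> degree p"
      by (rule card_poly_roots_bound) (use np in auto)
    ultimately show False by linarith
  qed
  fix n assume "n < k"
  thus "f n = 0" using co[of n] p0 by simp
qed

lemma binexp:
  fixes x y w :: complex
  assumes k: "k > 0" and w: "w ^ k = 1"
  shows "(x + w * y) ^ k = y ^ k + (\<Sum>m<k. (of_nat (k choose m) * y ^ m * x ^ (k - m)) * w ^ m)"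
proof -
  have "(x + w * y) ^ k = (w * y + x) ^ k" by (simp only: add.commute)
  also have "\<dots> = (\<Sum>m\<le>k. of_nat (k choose m) * (w * y) ^ m * x ^ (k - m))"
    by (rule binomial_ring)
  also have "\<dots> = (\<Sum>m<Suc k. of_nat (k choose m) * (w * y) ^ m * x ^ (k - m))"
    by (simp add: lessThan_Suc_atMost)
  also have "\<dots> = (\<Sum>m<k. of_nat (k choose m) * (w * y) ^ m * x ^ (k - m)) + (w * y) ^ k"
    by simp
  also have "(w * y) ^ k = y ^ k" using w by (simp add: power_mult_distrib)
  also have "(\<Sum>m<k. of_nat (k choose m) * (w * y) ^ m * x ^ (k - m)) = (\<Sum>m<k. (of_nat (k choose m) * y ^ m * x ^ (k - m)) * w ^ m)"
    by (rule sum.cong) (simp_all add: power_mult_distrib)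
  finally show ?thesis by (simp only: add.commute)
qed

lemma coeffs:
  fixes x y u v :: complex
  assumes k: "k > 0" and h: "\<And>w. w ^ k = 1 \<Longrightarrow> (x + w * y) ^ k = (u + w * v) ^ k"
  shows "x ^ k + y ^ k = u ^ k + v ^ k"
    and "\<And>m. 0 < m \<Longrightarrow> m < k \<Longrightarrow> x ^ (k - m) * y ^ m = u ^ (k - m) * v ^ m"
proof -
  define A where "A m = of_nat (k choose m) * y ^ m * x ^ (k - m)" for m
  define B where "B m = of_nat (k choose m) * v ^ m * u ^ (k - m)" for m
  define C where "C (m::nat) = (if m = 0 then y ^ k - v ^ k else 0)" for m
  define f where "f m = A m - B m + C m" for m
  have z: "f n = 0" if "n < k" for n
  proof (rule vanish[OF k _ that])
    fix w :: complex assume w: "w ^ k = 1"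
    have "(\<Sum>m<k. f m * w ^ m) = (\<Sum>m<k. A m * w ^ m - B m * w ^ m + C m * w ^ m)"
      by (rule sum.cong) (simp_all add: f_def ring_distribs)
    also have "\<dots> = (\<Sum>m<k. A m * w ^ m) - (\<Sum>m<k. B m * w ^ m) + (\<Sum>m<k. C m * w ^ m)"
      by (simp only: sum.distrib sum_subtractf)
    also have "(\<Sum>m<k. C m * w ^ m) = y ^ k - v ^ k"
    proof -
      have "(\<Sum>m<k. C m * w ^ m) = (\<Sum>m<k. if m = 0 then y ^ k - v ^ k else 0)"
        by (rule sum.cong) (auto simp: C_def)
      also have "\<dots> = y ^ k - v ^ k" using k by simp
      finally show ?thesis .
    qed
    also have "y ^ k + (\<Sum>m<k. A m * w ^ m) = v ^ k + (\<Sum>m<k. B m * w ^ m)"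
      using h[OF w] binexp[OF k w, of x y] binexp[OF k w, of u v] by (simp add: A_def B_def)
    hence "(\<Sum>m<k. A m * w ^ m) - (\<Sum>m<k. B m * w ^ m) + (y ^ k - v ^ k) = 0"
      by (simp add: algebra_simps)
    finally show "(\<Sum>m<k. f m * w ^ m) = 0" .
  qed
  show "x ^ k + y ^ k = u ^ k + v ^ k" using z[OF k] by (simp add: f_def A_def B_def C_def algebra_simps)
  fix m assume "0 < m" "m < k"
  with z[of m] show "x ^ (k - m) * y ^ m = u ^ (k - m) * v ^ m"
    by (simp add: f_def A_def B_def C_def mult_ac)
qed

theorem mainTheorem15:
  fixes k :: nat and a b c d :: complex
  assumes hk: "k \<ge> 2"
    and h1: "\<And>j::nat. (a + (cis (2 * pi / real k)) ^ j * d) ^ k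
                       = (c + (cis (2 * pi / real k)) ^ j * b) ^ k"
    and h2: "\<And>j::nat. (a + (cis (2 * pi / real k)) ^ j * c) ^ k
                       = (d + (cis (2 * pi / real k)) ^ j * b) ^ k"
  shows "(k \<ge> 3 \<longrightarrow>
            (a = 0 \<and> b = 0 \<and> c = 0 \<and> d = 0)
          \<or> (a = 0 \<and> b = 0 \<and> c ^ k = d ^ k)
          \<or> (c = 0 \<and> d = 0 \<and> a ^ k = b ^ k)
          \<or> (a \<noteq> 0 \<and> b \<noteq> 0 \<and> c \<noteq> 0 \<and> d \<noteq> 0 \<and> a * b = c * d \<and>
             (\<forall>x\<in>{a, b, c, d}. \<forall>y\<in>{a, b, c, d}. (x / y) ^ k = 1)))
       \<and> (k = 2 \<longrightarrow>
            (a = 0 \<and> b = 0 \<and> c = 0 \<and> d = 0)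
          \<or> (a = 0 \<and> b = 0 \<and> c ^ 2 = d ^ 2)
          \<or> (c = 0 \<and> d = 0 \<and> a ^ 2 = b ^ 2)
          \<or> (a \<noteq> 0 \<and> b \<noteq> 0 \<and> c \<noteq> 0 \<and> d \<noteq> 0 \<and> b = a \<and> d = c)
          \<or> (a \<noteq> 0 \<and> b \<noteq> 0 \<and> c \<noteq> 0 \<and> d \<noteq> 0 \<and> b = - a \<and> d = - c))"
proof -
  define l where "l = cis (2 * pi / real k)"
  have k0: "k > 0" using hk by simp
  have root: "\<exists>j. w = l ^ j" if "w ^ k = 1" for w :: complex
  proof -
    have "w \<in> (\<lambda>j. cis (2 * pi * real j / real k)) ` {..<k}"
      using bij_betw_roots_unity[OF k0] that unfolding bij_betw_def by simp
    then obtain j where "w = cis (2 * pi * real j / real k)" by blast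
    also have "\<dots> = l ^ j" by (simp add: l_def DeMoivre mult_ac)
    finally show ?thesis by blast
  qed
  have H1: "(a + w * d) ^ k = (c + w * b) ^ k" if wk: "w ^ k = 1" for w
  proof -
    obtain j where "w = l ^ j" using root[OF wk] by blast
    thus ?thesis using h1[of j] by (simp add: l_def)
  qed
  have H2: "(a + w * c) ^ k = (d + w * b) ^ k" if wk: "w ^ k = 1" for w
  proof -
    obtain j where "w = l ^ j" using root[OF wk] by blast
    thus ?thesis using h2[of j] by (simp add: l_def)
  qed
  have H1': "\<And>w. w ^ k = 1 \<Longrightarrow> (a + w * d) ^ k = (c + w * b) ^ k" by (rule H1)
  have H2': "\<And>w. w ^ k = 1 \<Longrightarrow> (a + w * c) ^ k = (d + w * b) ^ k" by (rule H2)
  have E1: "a ^ k + d ^ k = c ^ k + b ^ k" by (rule coeffs(1)[of k a d c b, OF k0 H1'])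
  have E2: "a ^ k + c ^ k = d ^ k + b ^ k" by (rule coeffs(1)[of k a c d b, OF k0 H2'])
  have P1: "a ^ (k - m) * d ^ m = c ^ (k - m) * b ^ m" if "0 < m" "m < k" for m
    by (rule coeffs(2)[of k a d c b, OF k0 H1' that])
  have P2: "a ^ (k - m) * c ^ m = d ^ (k - m) * b ^ m" if "0 < m" "m < k" for m
    by (rule coeffs(2)[of k a c d b, OF k0 H2' that])
  have ab: "a ^ k = b ^ k" using E1 E2
  proof -
    have "2 * a ^ k = (a ^ k + d ^ k) + (a ^ k + c ^ k) - d ^ k - c ^ k" by (simp add: algebra_simps)
    also have "\<dots> = (c ^ k + b ^ k) + (d ^ k + b ^ k) - d ^ k - c ^ k" using E1 E2 by simp
    also have "\<dots> = 2 * b ^ k" by (simp add: algebra_simps)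
    finally have "2 * a ^ k = 2 * b ^ k" .
    thus ?thesis by simp
  qed
  have cd: "c ^ k = d ^ k" using E1 ab by simp
  have A: "?thesis" if k3: "k \<ge> 3"
  proof -
    obtain n where n: "k = n + 2" "n \<ge> 1" by (rule that[of "k - 2"]) (use k3 in auto)
    have q1: "a ^ (n + 1) * d = c ^ (n + 1) * b" using P1[of 1] n by simp
    have q2: "a ^ n * d ^ 2 = c ^ n * b ^ 2" using P1[of 2] n by simp
    have "(a = 0 \<and> b = 0 \<and> c = 0 \<and> d = 0)
          \<or> (a = 0 \<and> b = 0 \<and> c ^ k = d ^ k)
          \<or> (c = 0 \<and> d = 0 \<and> a ^ k = b ^ k)
          \<or> (a \<noteq> 0 \<and> b \<noteq> 0 \<and> c \<noteq> 0 \<and> d \<noteq> 0 \<and> a * b = c * d \<and>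
             (\<forall>x\<in>{a, b, c, d}. \<forall>y\<in>{a, b, c, d}. (x / y) ^ k = 1))"
    proof (cases "a = 0")
      case True
      hence "b = 0" using ab k0 by (metis power_eq_0_iff zero_power)
      thus ?thesis using True cd by blast
    next
      case a0: False
      show ?thesis
      proof (cases "c = 0")
        case True
        hence "d = 0" using cd k0 by (metis power_eq_0_iff zero_power)
        thus ?thesis using True ab by blast
      next
      case c0: False
      have b0: "b \<noteq> 0" using ab a0 k0 by (metis power_eq_0_iff)
      have d0: "d \<noteq> 0" using cd c0 k0 by (metis power_eq_0_iff)
      have "a ^ (n + 2) * (a ^ n * d ^ 2) = (a ^ (n + 1) * d) ^ 2"
        by (simp add: power2_eq_square power_add algebra_simps)
      also have "\<dots> = (c ^ (n + 1) * b) ^ 2" using q1 by simp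
      also have "\<dots> = c ^ (n + 2) * (c ^ n * b ^ 2)"
        by (simp add: power2_eq_square power_add algebra_simps)
      finally have "a ^ (n + 2) * (a ^ n * d ^ 2) = c ^ (n + 2) * (a ^ n * d ^ 2)" using q2 by simp
      moreover have "a ^ n * d ^ 2 \<noteq> 0" using a0 d0 by simp
      ultimately have ac: "a ^ k = c ^ k" using n by simp
      have "a ^ (n + 2) * (c * d) = a * c * (a ^ (n + 1) * d)" by (simp add: algebra_simps)
      also have "\<dots> = a * c * (c ^ (n + 1) * b)" using q1 by simp
      also have "\<dots> = c ^ (n + 2) * (a * b)" by (simp add: algebra_simps)
      also have "\<dots> = a ^ (n + 2) * (a * b)" using ac n by simp
      finally have abcd: "a * b = c * d" using a0 by simp
      have all: "x ^ k = a ^ k \<and> x \<noteq> 0" if "x \<in> {a, b, c, d}" for x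
        using that ab cd ac a0 b0 c0 d0 by auto
      have "(x / y) ^ k = 1" if "x \<in> {a, b, c, d}" "y \<in> {a, b, c, d}" for x y
        using all[OF that(1)] all[OF that(2)] a0 by (simp add: power_divide)
      thus ?thesis using a0 b0 c0 d0 abcd by blast
      qed
    qed
    thus ?thesis using k3 by simp
  qed
  have B: "?thesis" if k2: "k = 2"
  proof -
    have q1: "a * d = c * b" using P1[of 1] k2 by simp
    have q2: "a * c = d * b" using P2[of 1] k2 by simp
    have "b = a \<or> b = - a" using ab k2 by (auto simp add: power2_eq_iff)
    moreover have "d = c \<or> d = - c" using cd k2 by (auto simp add: power2_eq_iff)
    ultimately show ?thesis
    proof (elim disjE)
      assume "b = a" "d = c"
      thus ?thesis using k2 by auto
    next
      assume "b = - a" "d = - c"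
      thus ?thesis using k2 by auto
    next
      assume "b = a" "d = - c"
      hence "a * c = 0" using q1 by simp
      thus ?thesis using \<open>b = a\<close> \<open>d = - c\<close> k2 by auto
    next
      assume "b = - a" "d = c"
      hence "a * c = 0" using q1 by simp
      thus ?thesis using \<open>b = - a\<close> \<open>d = c\<close> k2 by auto
    qed
  qed
  show ?thesis using A B hk by linarith
qed

end
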